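(* There exists a strongly hypoenergetic tree of order $n$ with maximum degree $4$ for every $n$ satisfying one of the following: $n\equiv 0 \pmod 4$ and $n\geq 20$; or $n\equiv 2\pmod 4$ and $n\geq 26$; or $n\equiv 3\pmod 4$ and $n\geq 23$.
   Context: All graphs are finite and simple. The energy of a graph $G$ is $E(G)=\sum_{i=1}^n |\lambda_i|$, where $\lambda_1,\dots,\lambda_n$ are the eigenvalues of the adjacency matrix of $G$. A connected graph $G$ with $n$ vertices is called strongly hypoenergetic if $E(G)<n-1$. *)

theory Defs
  imports "Jordan_Normal_Form.Char_Poly" "HOL-Computational_Algebra.Fundamental_Theorem_Algebra"
begin

definition simple_graph :: "nat \<Rightarrow> (nat \<Rightarrow> nat \<Rightarrow> bool) \<Rightarrow> bool" where
  "simple_graph n E \<longleftrightarrow> (\<forall>i j. E i j \<longrightarrow> i < n \<and> j < n \<and> i \<noteq> j \<and> E j i)"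

definition graph_connected :: "nat \<Rightarrow> (nat \<Rightarrow> nat \<Rightarrow> bool) \<Rightarrow> bool" where
  "graph_connected n E \<longleftrightarrow> (\<forall>u<n. \<forall>v<n. E\<^sup>*\<^sup>* u v)"

definition is_cycle :: "nat \<Rightarrow> (nat \<Rightarrow> nat \<Rightarrow> bool) \<Rightarrow> nat list \<Rightarrow> bool" where
  "is_cycle n E vs \<longleftrightarrow> length vs \<ge> 3 \<and> distinct vs \<and> set vs \<subseteq> {..<n}
     \<and> (\<forall>i. Suc i < length vs \<longrightarrow> E (vs ! i) (vs ! Suc i)) \<and> E (last vs) (hd vs)"

definition is_tree :: "nat \<Rightarrow> (nat \<Rightarrow> nat \<Rightarrow> bool) \<Rightarrow> bool" where
  "is_tree n E \<longleftrightarrow> simple_graph n E \<and> graph_connected n E \<and> (\<nexists>vs. is_cycle n E vs)"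

definition degree_of :: "nat \<Rightarrow> (nat \<Rightarrow> nat \<Rightarrow> bool) \<Rightarrow> nat \<Rightarrow> nat" where
  "degree_of n E v = card {u. u < n \<and> E v u}"

definition max_degree :: "nat \<Rightarrow> (nat \<Rightarrow> nat \<Rightarrow> bool) \<Rightarrow> nat" where
  "max_degree n E = Max (degree_of n E ` {..<n})"

text \<open>Adjacency matrix (over the complex numbers, where its characteristic polynomial splits).\<close>
definition adj_matrix :: "nat \<Rightarrow> (nat \<Rightarrow> nat \<Rightarrow> bool) \<Rightarrow> complex mat" where
  "adj_matrix n E = mat n n (\<lambda>(i, j). if E i j then 1 else 0)"

definition energy :: "nat \<Rightarrow> (nat \<Rightarrow> nat \<Rightarrow> bool) \<Rightarrow> real" where
  "energy n E = sum_mset (image_mset cmod (proots (char_poly (adj_matrix n E))))"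

definition strongly_hypoenergetic :: "nat \<Rightarrow> (nat \<Rightarrow> nat \<Rightarrow> bool) \<Rightarrow> bool" where
  "strongly_hypoenergetic n E \<longleftrightarrow> simple_graph n E \<and> graph_connected n E \<and> energy n E < real n - 1"

end

theory Submission
  imports Defs "Jordan_Normal_Form.Schur_Decomposition"
begin


definition adj :: "complex mat \<Rightarrow> complex mat" where
  "adj M = mat (dim_col M) (dim_row M) (\<lambda>(i,j). cnj (M $$ (j,i)))"

lemma adj_carrier[simp]: "M \<in> carrier_mat a b \<Longrightarrow> adj M \<in> carrier_mat b a"
  by (auto simp: adj_def)

lemma adj_dims[simp]: "dim_row (adj M) = dim_col M" "dim_col (adj M) = dim_row M"
  by (auto simp: adj_def)

lemma adj_index[simp]: "i < dim_col M \<Longrightarrow> j < dim_row M \<Longrightarrow> adj M $$ (i,j) = cnj (M $$ (j,i))"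
  by (auto simp: adj_def)

lemma mult_entry:
  assumes "A \<in> carrier_mat a b" "B \<in> carrier_mat b c" "i < a" "j < c"
  shows "(A * B) $$ (i,j) = (\<Sum>k<b. A $$ (i,k) * B $$ (k,j))"
  using assms by (simp add: scalar_prod_def lessThan_atLeast0)

lemma adj_mult:
  assumes X: "X \<in> carrier_mat a b" and Y: "Y \<in> carrier_mat b c"
  shows "adj (X * Y) = adj Y * adj X"
proof (rule eq_matI)
  fix i j assume i: "i < dim_row (adj Y * adj X)" and j: "j < dim_col (adj Y * adj X)"
  then have i': "i < c" and j': "j < a" using X Y by auto
  have "adj (X * Y) $$ (i,j) = cnj ((X*Y) $$ (j,i))" using X Y i' j' by simp
  also have "\<dots> = (\<Sum>k<b. cnj (X $$ (j,k)) * cnj (Y $$ (k,i)))"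
    using mult_entry[OF X Y j' i'] by simp
  also have "\<dots> = (adj Y * adj X) $$ (i,j)"
    by (subst mult_entry[of _ c b _ a], use X Y i' j' in \<open>auto simp: mult.commute\<close>)
  finally show "adj (X * Y) $$ (i, j) = (adj Y * adj X) $$ (i, j)" .
qed (use X Y in auto)

lemma sum_swap3: "(\<Sum>k\<in>A. \<Sum>i\<in>B. \<Sum>j\<in>C. f i j k) = (\<Sum>i\<in>B. \<Sum>j\<in>C. \<Sum>k\<in>A. f i j k)"
proof -
  have "(\<Sum>k\<in>A. \<Sum>i\<in>B. \<Sum>j\<in>C. f i j k) = (\<Sum>i\<in>B. \<Sum>k\<in>A. \<Sum>j\<in>C. f i j k)"
    by (rule sum.swap)
  also have "\<dots> = (\<Sum>i\<in>B. \<Sum>j\<in>C. \<Sum>k\<in>A. f i j k)"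
    by (rule sum.cong[OF refl], rule sum.swap)
  finally show ?thesis .
qed

lemma sq_norm_cnj: "complex_of_real ((cmod z)^2) = z * cnj z"
  by (rule complex_norm_square)

lemma parseval:
  assumes U: "U \<in> carrier_mat n n" and UU: "U * adj U = 1\<^sub>m n"
  shows "(\<Sum>k<n. (cmod (\<Sum>i<n. U $$ (i,k) * complex_of_real (x i)))^2) = (\<Sum>i<n. (x i)^2)"
proof -
  have d: "\<And>i j. i < n \<Longrightarrow> j < n \<Longrightarrow> (\<Sum>k<n. U $$ (i,k) * cnj (U $$ (j,k))) = (if i = j then 1 else 0)"
  proof -
    fix i j assume "i < n" "j < n"
    have "(U * adj U) $$ (i,j) = (\<Sum>k<n. U $$ (i,k) * adj U $$ (k,j))"
      by (rule mult_entry[of _ n n _ n], use U \<open>i<n\<close> \<open>j<n\<close> in auto)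
    also have "\<dots> = (\<Sum>k<n. U $$ (i,k) * cnj (U $$ (j,k)))"
      by (rule sum.cong, use U \<open>j<n\<close> in auto)
    finally show "(\<Sum>k<n. U $$ (i,k) * cnj (U $$ (j,k))) = (if i = j then 1 else 0)"
      using UU \<open>i<n\<close> \<open>j<n\<close> by simp
  qed
  have "complex_of_real (\<Sum>k<n. (cmod (\<Sum>i<n. U $$ (i,k) * complex_of_real (x i)))^2)
      = (\<Sum>k<n. (\<Sum>i<n. U $$ (i,k) * complex_of_real (x i)) * cnj (\<Sum>j<n. U $$ (j,k) * complex_of_real (x j)))"
    by (simp only: of_real_sum sq_norm_cnj)
  also have "\<dots> = (\<Sum>k<n. \<Sum>i<n. \<Sum>j<n. complex_of_real (x i * x j) * (U $$ (i,k) * cnj (U $$ (j,k))))"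
    unfolding cnj_sum sum_distrib_left sum_distrib_right
    apply (rule sum.cong[OF refl])
    apply (subst sum.swap)
    apply (rule sum.cong[OF refl], rule sum.cong[OF refl])
    apply simp
    done
  also have "\<dots> = (\<Sum>i<n. \<Sum>j<n. complex_of_real (x i * x j) * (\<Sum>k<n. U $$ (i,k) * cnj (U $$ (j,k))))"
    unfolding sum_distrib_left by (rule sum_swap3)
  also have "\<dots> = (\<Sum>i<n. \<Sum>j<n. if i = j then complex_of_real (x i * x j) else 0)"
    by (rule sum.cong, simp, rule sum.cong, simp, simp add: d)
  also have "\<dots> = complex_of_real (\<Sum>i<n. (x i)^2)"
    by (simp add: power2_eq_square)
  finally show ?thesis by (simp only: of_real_eq_iff)
qed

definition nrm :: "complex vec \<Rightarrow> complex vec" where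
  "nrm w = complex_of_real (1 / sqrt (Re (w \<bullet>c w))) \<cdot>\<^sub>v w"

lemma cscalar_smult:
  assumes "v \<in> carrier_vec n" "w \<in> carrier_vec n"
  shows "(a \<cdot>\<^sub>v v) \<bullet>c (b \<cdot>\<^sub>v w) = a * cnj b * (v \<bullet>c w)"
  using assms by (simp add: scalar_prod_def sum_distrib_left mult_ac)

lemma cself_real: "(w :: complex vec) \<bullet>c w = complex_of_real (Re (w \<bullet>c w))"
proof -
  have "0 \<le> w \<bullet>c w" by auto
  then have "Im (w \<bullet>c w) = 0" by (simp add: less_eq_complex_def)
  then show ?thesis by (simp add: complex_eq_iff)
qed

lemma cself_pos: assumes "w \<in> carrier_vec n" "w \<noteq> 0\<^sub>v n"
  shows "Re ((w :: complex vec) \<bullet>c w) > 0"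
proof -
  have "0 < w \<bullet>c w" using assms by simp
  then show ?thesis by (simp add: less_complex_def)
qed

lemma nrm_carrier[simp]: "w \<in> carrier_vec n \<Longrightarrow> nrm w \<in> carrier_vec n"
  by (simp add: nrm_def)

lemma nrm_unit: assumes "w \<in> carrier_vec n" "w \<noteq> 0\<^sub>v n"
  shows "nrm w \<bullet>c nrm w = 1"
proof -
  define r where "r = Re (w \<bullet>c w)"
  have r: "r > 0" using cself_pos[OF assms] by (simp add: r_def)
  have "nrm w \<bullet>c nrm w = complex_of_real (1 / sqrt r) * cnj (complex_of_real (1 / sqrt r)) * (w \<bullet>c w)"
    unfolding nrm_def r_def by (rule cscalar_smult[OF assms(1) assms(1)])
  also have "w \<bullet>c w = complex_of_real r" unfolding r_def by (rule cself_real)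
  also have "complex_of_real (1 / sqrt r) * cnj (complex_of_real (1 / sqrt r)) * complex_of_real r
      = complex_of_real ((1 / sqrt r) * (1 / sqrt r) * r)" by (simp only: complex_cnj_complex_of_real of_real_mult)
  also have "(1 / sqrt r) * (1 / sqrt r) * r = 1" using r
    by (simp add: field_simps)
  finally show ?thesis by simp
qed

lemma nrm_orth: assumes "v \<in> carrier_vec n" "w \<in> carrier_vec n"
  shows "nrm v \<bullet>c nrm w = 0 \<longleftrightarrow> v \<bullet>c w = 0 \<or> v = 0\<^sub>v n \<or> w = 0\<^sub>v n"
proof -
  have "nrm v \<bullet>c nrm w = complex_of_real (1 / sqrt (Re (v \<bullet>c v))) * cnj (complex_of_real (1 / sqrt (Re (w \<bullet>c w)))) * (v \<bullet>c w)"
    unfolding nrm_def by (rule cscalar_smult[OF assms])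
  moreover have "v \<noteq> 0\<^sub>v n \<Longrightarrow> Re (v \<bullet>c v) > 0" using cself_pos assms by blast
  moreover have "w \<noteq> 0\<^sub>v n \<Longrightarrow> Re (w \<bullet>c w) > 0" using cself_pos assms by blast
  moreover have "v = 0\<^sub>v n \<Longrightarrow> v \<bullet>c w = 0" using assms by simp
  ultimately show ?thesis by auto
qed

lemma corthogonal_nrm:
  assumes "corthogonal ws" "set ws \<subseteq> carrier_vec n"
  shows "corthogonal (map nrm ws)"
proof (rule corthogonalI)
  fix i j assume i: "i < length (map nrm ws)" and j: "j < length (map nrm ws)"
  then have i': "i < length ws" and j': "j < length ws" by auto
  have wi: "ws ! i \<in> carrier_vec n" "ws ! j \<in> carrier_vec n" using assms(2) i' j' by auto
  have nz: "\<And>k. k < length ws \<Longrightarrow> ws ! k \<noteq> 0\<^sub>v n"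
  proof
    fix k assume k: "k < length ws" "ws ! k = 0\<^sub>v n"
    then have "ws ! k \<bullet>c ws ! k = 0" by simp
    with corthogonalD[OF assms(1) k(1) k(1)] show False by simp
  qed
  show "map nrm ws ! i \<bullet>c map nrm ws ! j = 0 \<longleftrightarrow> i \<noteq> j"
    using nrm_orth[OF wi] nz[OF i'] nz[OF j'] corthogonalD[OF assms(1) i' j'] i' j' by simp
qed

lemma unitary_schur:
  assumes "(A::complex mat) \<in> carrier_mat n n" "char_poly A = (\<Prod>e\<leftarrow>es. [:-e,1:])"
  shows "\<exists>U. U \<in> carrier_mat n n \<and> adj U * U = 1\<^sub>m n \<and> (\<forall>k<n. (adj U * A * U) $$ (k,k) = es ! k)"
  using assms
proof (induct es arbitrary: n A)
  case Nil
  with degree_monic_char_poly[of A n] have "n = 0" by auto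
  then show ?case by (intro exI[of _ "1\<^sub>m 0"], auto intro!: eq_matI)
next
  case (Cons e es n A)
  let ?n1 = "n - 1"
  from Cons have A: "A \<in> carrier_mat n n" and dim: "dim_row A = n" by auto
  let ?cp = "char_poly A"
  from Cons(3)
  have cp: "?cp = [: -e, 1 :] * (\<Prod>e \<leftarrow> es. [:- e, 1:])" by auto
  have mon: "monic (\<Prod>e\<leftarrow> es. [:- e, 1:])" by (rule monic_prod_list, auto)
  have deg: "degree ?cp = Suc (degree (\<Prod>e\<leftarrow> es. [:- e, 1:]))" unfolding cp
    by (subst degree_mult_eq, insert mon, auto)
  with degree_monic_char_poly[OF A] have n: "n \<noteq> 0" by auto
  have e: "eigenvalue A e"
    unfolding eigenvalue_root_char_poly[OF A] cp by simp
  define v0 where "v0 = find_eigenvector A e"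
  from find_eigenvector[OF A e] have ev: "eigenvector A v0 e" unfolding v0_def .
  from this[unfolded eigenvector_def]
  have v0[simp]: "v0 \<in> carrier_vec n" and v00: "v0 \<noteq> 0\<^sub>v n" and ev0: "A *\<^sub>v v0 = e \<cdot>\<^sub>v v0" using A by auto
  define b where "b = basis_completion v0"
  interpret cof_vec_space n "TYPE(complex)" .
  from basis_completion[OF v0 v00, folded b_def]
  have span_b: "span (set b) = carrier_vec n" and dist_b: "distinct b" 
    and indep: "\<not> lin_dep (set b)" and b: "set b \<subseteq> carrier_vec n" and hdb: "hd b = v0" 
    and len_b: "length b = n" by auto
  from hdb len_b n obtain vs where bv: "b = v0 # vs" by (cases b, auto)
  define ws0 where "ws0 = gram_schmidt n b"
  from gram_schmidt_result[OF b dist_b indep refl, folded ws0_def]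
  have ws0: "set ws0 \<subseteq> carrier_vec n" "corthogonal ws0" "length ws0 = n" 
    by (auto simp: len_b)
  from gram_schmidt_hd[OF v0, of vs, folded bv] have hdws0: "hd ws0 = v0" unfolding ws0_def .
  define ws where "ws = map nrm ws0"
  define v where "v = nrm v0"
  have ws: "set ws \<subseteq> carrier_vec n" "corthogonal ws" "length ws = n"
    using ws0 corthogonal_nrm[OF ws0(2) ws0(1)] unfolding ws_def by auto
  have hdws: "hd ws = v" unfolding ws_def v_def using hdws0 ws0(3) n by (cases ws0, auto)
  have v[simp]: "v \<in> carrier_vec n" unfolding v_def by simp
  have vunit: "v \<bullet>c v = 1" unfolding v_def by (rule nrm_unit[OF v0 v00])
  have v_nz: "v \<noteq> 0\<^sub>v n" using vunit v by auto
  have eigen: "A *\<^sub>v v = e \<cdot>\<^sub>v v"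
    unfolding v_def nrm_def using A ev0 by (simp add: mult_mat_vec smult_smult_assoc mult.commute)
  have wsunit: "\<And>i. i < n \<Longrightarrow> ws ! i \<bullet>c ws ! i = 1"
  proof -
    fix i assume i: "i < n"
    have c: "ws0 ! i \<in> carrier_vec n" using ws0 i by auto
    have "ws0 ! i \<noteq> 0\<^sub>v n"
    proof
      assume "ws0 ! i = 0\<^sub>v n"
      then have "ws0 ! i \<bullet>c ws0 ! i = 0" by simp
      with corthogonalD[OF ws0(2), of i i] i ws0(3) show False by simp
    qed
    then show "ws ! i \<bullet>c ws ! i = 1" unfolding ws_def using nrm_unit[OF c] i ws0(3) by simp
  qed
  define W where "W = mat_of_cols n ws"
  define W' where "W' = corthogonal_inv W"
  define A' where "A' = W' * A * W"
  have orth_W: "corthogonal_mat W" using orthogonal_mat_of_cols ws unfolding W_def.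
  have W: "W \<in> carrier_mat n n"
    using ws unfolding W_def using mat_of_cols_carrier(1)[of n ws] by auto
  have W': "W' \<in> carrier_mat n n" unfolding W'_def corthogonal_inv_def using W 
    by (auto simp: mat_of_rows_def)  
  from corthogonal_inv_result[OF orth_W] 
  have W'W: "inverts_mat W' W" unfolding W'_def .
  hence WW': "inverts_mat W W'" using mat_mult_left_right_inverse[OF W' W] W' W
    unfolding inverts_mat_def by auto
  have colW: "\<And>i. i < n \<Longrightarrow> col W i = ws ! i" unfolding W_def using ws
    by (intro col_mat_of_cols, auto)
  have W'adj: "W' = adj W"
  proof (rule eq_matI)
    fix i j assume i: "i < dim_row (adj W)" and j: "j < dim_col (adj W)"
    then have i': "i < n" and j': "j < n" using W by auto
    have "W' $$ (i,j) = vec_inv (col W i) $ j"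
      unfolding W'_def corthogonal_inv_def using W i' j' by (simp add: mat_of_rows_index)
    also have "\<dots> = cnj (W $$ (j,i))"
    proof -
      have u: "col W i \<bullet>c col W i = 1" using wsunit[OF i'] colW[OF i'] by simp
      show ?thesis unfolding vec_inv_def using u W i' j' by simp
    qed
    finally show "W' $$ (i,j) = adj W $$ (i,j)" using W i' j' by simp
  qed (use W W' in auto)
  have A': "A' \<in> carrier_mat n n" using W W' A unfolding A'_def by auto
  have A'A_wit: "similar_mat_wit A' A W' W"
    by (rule similar_mat_witI[of _ _ n], insert W W' A A' W'W WW', auto simp: A'_def
    inverts_mat_def)
  hence A'A: "similar_mat A' A" unfolding similar_mat_def by blast
  let ?f = "(\<lambda> i. if i = 0 then e else 0)"
  have col0: "col A' 0 = vec n ?f"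
    unfolding A'_def W'_def W_def
    using corthogonal_col_ev_0[OF A v v_nz eigen n hdws ws].
  from A' n have dimsA': "dim_row A' = 1 + ?n1" "dim_col A' = 1 + ?n1" by auto
  obtain A1 A2 A0 A3 where splitA': "split_block A' 1 1 = (A1,A2,A0,A3)"
    by (cases "split_block A' 1 1", auto)
  from split_block[OF splitA' dimsA'] have A2: "A2 \<in> carrier_mat 1 ?n1"
    and A3: "A3 \<in> carrier_mat ?n1 ?n1" 
    and A'block: "A' = four_block_mat A1 A2 A0 A3" by auto
  have A1id: "A1 = mat 1 1 (\<lambda> _. e)"
    using splitA'[unfolded split_block_def Let_def] arg_cong[OF col0, of "\<lambda> v. v $ 0"] A' n
    by (auto simp: col_def)
  have A1: "A1 \<in> carrier_mat 1 1" unfolding A1id by auto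
  {
    fix i
    assume "i < ?n1"
    with arg_cong[OF col0, of "\<lambda> v. v $ Suc i"] A'
    have "A' $$ (Suc i, 0) = 0" by auto
  } note A'0 = this
  have A0id: "A0 = 0\<^sub>m ?n1 1"
    using splitA'[unfolded split_block_def Let_def] A'0 A' by auto
  from cp char_poly_similar[OF A'A]
  have cp: "char_poly A' = [: -e,1 :] * (\<Prod> e \<leftarrow> es. [:- e, 1:])" by simp
  also have "char_poly A' = char_poly A1 * char_poly A3" 
    unfolding A'block A0id
    by (rule char_poly_four_block_zeros_col[OF A1 A2 A3])
  also have "char_poly A1 = [: -e,1 :]"
    by (simp add: A1id char_poly_defs det_def sign_def)
  finally have cp: "char_poly A3 = (\<Prod> e \<leftarrow> es. [:- e, 1:])"
    by (metis mult_cancel_left pCons_eq_0_iff zero_neq_one)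
  from Cons(1)[OF A3 cp] obtain U3 where U3: "U3 \<in> carrier_mat ?n1 ?n1" and U3u: "adj U3 * U3 = 1\<^sub>m ?n1"
    and U3d: "\<forall>k<?n1. (adj U3 * A3 * U3) $$ (k,k) = es ! k" by blast
  define D where "D = four_block_mat (1\<^sub>m 1) (0\<^sub>m 1 ?n1) (0\<^sub>m ?n1 1) U3"
  have D: "D \<in> carrier_mat n n" unfolding D_def using U3 four_block_carrier_mat[of "1\<^sub>m 1" 1 1 U3 ?n1 ?n1] n
    by auto
  have adjD: "adj D = four_block_mat (1\<^sub>m 1) (0\<^sub>m 1 ?n1) (0\<^sub>m ?n1 1) (adj U3)"
    by (rule eq_matI, insert U3 n, auto simp: D_def)
  define U where "U = W * D"
  have U: "U \<in> carrier_mat n n" unfolding U_def using W D by auto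
  have adjU: "adj U = adj D * adj W" unfolding U_def by (rule adj_mult[OF W D])
  have adjWW: "adj W * W = 1\<^sub>m n" using W'W unfolding W'adj inverts_mat_def using W by simp
  have adjDD: "adj D * D = 1\<^sub>m n"
  proof -
    have "adj D * D = four_block_mat (1\<^sub>m 1 * 1\<^sub>m 1 + 0\<^sub>m 1 ?n1 * 0\<^sub>m ?n1 1) (1\<^sub>m 1 * 0\<^sub>m 1 ?n1 + 0\<^sub>m 1 ?n1 * U3)
      (0\<^sub>m ?n1 1 * 1\<^sub>m 1 + adj U3 * 0\<^sub>m ?n1 1) (0\<^sub>m ?n1 1 * 0\<^sub>m 1 ?n1 + adj U3 * U3)"
      apply (subst adjD) apply (unfold D_def) by (rule mult_four_block_mat, insert U3, auto)
    also have "\<dots> = four_block_mat (1\<^sub>m 1) (0\<^sub>m 1 ?n1) (0\<^sub>m ?n1 1) (1\<^sub>m ?n1)"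
      using U3 U3u by simp
    also have "\<dots> = 1\<^sub>m n" using n by simp
    finally show ?thesis .
  qed
  have unit: "adj U * U = 1\<^sub>m n"
  proof -
    have "adj U * U = (adj D * adj W) * (W * D)" by (subst adjU, simp add: U_def)
    also have "\<dots> = adj D * ((adj W * W) * D)"
      using W D adj_carrier[OF W] adj_carrier[OF D] by (simp add: assoc_mult_mat[of _ n n _ n _ n] mult_carrier_mat[of _ n n _ n])
    also have "\<dots> = 1\<^sub>m n" unfolding adjWW using D adjDD by simp
    finally show ?thesis .
  qed
  have prod: "adj U * A * U = adj D * A' * D"
  proof -
    have "adj U * A * U = (adj D * adj W) * A * (W * D)" by (subst adjU, simp add: U_def)
    also have "\<dots> = adj D * A' * D" unfolding A'_def W'adj
      using W D A adj_carrier[OF W] adj_carrier[OF D] by (simp add: assoc_mult_mat[of _ n n _ n _ n] mult_carrier_mat[of _ n n _ n])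
    finally show ?thesis .
  qed
  have blk: "adj D * A' * D = four_block_mat (A1 * 1\<^sub>m 1 + A2 * 0\<^sub>m ?n1 1) (A1 * 0\<^sub>m 1 ?n1 + A2 * U3)
      (0\<^sub>m ?n1 1 * 1\<^sub>m 1 + (adj U3 * A3) * 0\<^sub>m ?n1 1) (0\<^sub>m ?n1 1 * 0\<^sub>m 1 ?n1 + (adj U3 * A3) * U3)"
  proof -
    have "adj D * A' = four_block_mat (1\<^sub>m 1 * A1 + 0\<^sub>m 1 ?n1 * 0\<^sub>m ?n1 1) (1\<^sub>m 1 * A2 + 0\<^sub>m 1 ?n1 * A3)
      (0\<^sub>m ?n1 1 * A1 + adj U3 * 0\<^sub>m ?n1 1) (0\<^sub>m ?n1 1 * A2 + adj U3 * A3)"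
      unfolding adjD A'block A0id by (rule mult_four_block_mat, insert U3 A1 A2 A3, auto)
    also have "\<dots> = four_block_mat A1 A2 (0\<^sub>m ?n1 1) (adj U3 * A3)"
    proof -
      have c: "adj U3 * A3 \<in> carrier_mat ?n1 ?n1" using U3 A3 by auto
      show ?thesis using U3 A1 A2 A3 c by simp
    qed
    finally have 1: "adj D * A' = four_block_mat A1 A2 (0\<^sub>m ?n1 1) (adj U3 * A3)" .
    show ?thesis apply (subst 1) apply (unfold D_def) by (rule mult_four_block_mat, insert U3 A1 A2 A3, auto)
  qed
  have diag: "\<forall>k<n. (adj U * A * U) $$ (k,k) = (e # es) ! k"
  proof (intro allI impI)
    fix k assume k: "k < n"
    show "(adj U * A * U) $$ (k,k) = (e # es) ! k"
    proof (cases k)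
      case 0
      then show ?thesis unfolding prod blk using A1 A2 A3 U3 n by (simp add: A1id)
    next
      case (Suc k')
      then have k': "k' < ?n1" using k by auto
      have "(adj U * A * U) $$ (k,k) = (adj U3 * A3 * U3) $$ (k',k')"
        unfolding prod blk using A1 A2 A3 U3 k' Suc by simp
      then show ?thesis using U3d k' Suc by simp
    qed
  qed
  show ?case using U unit diag by blast
qed

lemma proots_prod_linear: "proots (\<Prod>e\<leftarrow>es. [:-e,1:]) = mset (es :: complex list)"
proof (induct es)
  case Nil then show ?case by simp
next
  case (Cons a es)
  have nz: "(\<Prod>e\<leftarrow>es. [:-e,1:]) \<noteq> (0 :: complex poly)"
    by (auto simp: prod_list_zero_iff)
  have "proots (\<Prod>e\<leftarrow>a#es. [:-e,1:]) = proots ([:-a,1:] * (\<Prod>e\<leftarrow>es. [:-e,1:]))" by simp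
  also have "\<dots> = proots [:-a,1:] + proots (\<Prod>e\<leftarrow>es. [:-e,1:])"
    by (rule proots_mult, simp, rule nz)
  also have "\<dots> = {#a#} + mset es" using Cons proots_linear_factor[of "-a"] by simp
  finally show ?case by simp
qed

lemma energy_eigs:
  assumes "char_poly (adj_matrix n E) = (\<Prod>e\<leftarrow>es. [:-e,1:])" "length es = n"
  shows "energy n E = (\<Sum>k<n. cmod (es ! k))"
  unfolding energy_def assms(1) proots_prod_linear mset_map[symmetric] sum_mset_sum_list sum_list_sum_nth
  by (simp add: assms(2) atLeast0LessThan)

lemma energy_bound:
  fixes E :: "nat \<Rightarrow> nat \<Rightarrow> bool" and T :: "'a set" and l r :: "'a \<Rightarrow> nat \<Rightarrow> real"
  assumes T: "finite T"
    and fac: "\<And>i j. i < n \<Longrightarrow> j < n \<Longrightarrow> (if E i j then 1 else 0) = (\<Sum>t\<in>T. l t i * r t j)"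
  shows "energy n E \<le> (\<Sum>t\<in>T. (\<Sum>i<n. (l t i)^2) + (\<Sum>i<n. (r t i)^2)) / 2"
proof -
  define A where "A = adj_matrix n E"
  have A: "A \<in> carrier_mat n n" unfolding A_def adj_matrix_def by simp
  obtain es where es: "char_poly A = (\<Prod>a\<leftarrow>es. [:- a, 1:])" "length es = n"
    using char_poly_factorized[OF A] by blast
  have en: "energy n E = (\<Sum>k<n. cmod (es ! k))" using energy_eigs es unfolding A_def by blast
  obtain U where U: "U \<in> carrier_mat n n" and Uu: "adj U * U = 1\<^sub>m n"
    and Ud: "\<forall>k<n. (adj U * A * U) $$ (k,k) = es ! k"
    using unitary_schur[OF A es(1)] by blast
  have UU: "U * adj U = 1\<^sub>m n" using mat_mult_left_right_inverse[OF adj_carrier[OF U] U Uu] .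
  define \<alpha> where "\<alpha> t k = (\<Sum>i<n. U $$ (i,k) * complex_of_real (l t i))" for t k
  define \<beta> where "\<beta> t k = (\<Sum>j<n. U $$ (j,k) * complex_of_real (r t j))" for t k
  have Aij: "\<And>i j. i < n \<Longrightarrow> j < n \<Longrightarrow> A $$ (i,j) = (\<Sum>t\<in>T. complex_of_real (l t i * r t j))"
  proof -
    fix i j assume ij: "i < n" "j < n"
    have "A $$ (i,j) = complex_of_real (if E i j then 1 else 0)"
      unfolding A_def adj_matrix_def using ij by simp
    also have "\<dots> = (\<Sum>t\<in>T. complex_of_real (l t i * r t j))" using fac[OF ij] by simp
    finally show "A $$ (i,j) = (\<Sum>t\<in>T. complex_of_real (l t i * r t j))" .
  qed
  have lam: "\<And>k. k < n \<Longrightarrow> es ! k = (\<Sum>t\<in>T. cnj (\<alpha> t k) * \<beta> t k)"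
  proof -
    fix k assume k: "k < n"
    have "es ! k = (adj U * A * U) $$ (k,k)" using Ud k by simp
    also have "\<dots> = (\<Sum>j<n. (adj U * A) $$ (k,j) * U $$ (j,k))"
      by (rule mult_entry[of _ n n _ n], use U A k in auto)
    also have "\<dots> = (\<Sum>j<n. (\<Sum>i<n. cnj (U $$ (i,k)) * A $$ (i,j)) * U $$ (j,k))"
    proof (rule sum.cong[OF refl])
      fix j assume "j \<in> {..<n}"
      then have "(adj U * A) $$ (k,j) = (\<Sum>i<n. adj U $$ (k,i) * A $$ (i,j))"
        by (intro mult_entry[of _ n n _ n], use U A k in auto)
      also have "\<dots> = (\<Sum>i<n. cnj (U $$ (i,k)) * A $$ (i,j))"
        by (rule sum.cong, use U k in auto)
      finally show "(adj U * A) $$ (k,j) * U $$ (j,k) = (\<Sum>i<n. cnj (U $$ (i,k)) * A $$ (i,j)) * U $$ (j,k)" by simp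
    qed
    also have "\<dots> = (\<Sum>j<n. \<Sum>i<n. \<Sum>t\<in>T. cnj (U $$ (i,k)) * complex_of_real (l t i) * (complex_of_real (r t j) * U $$ (j,k)))"
      by (rule sum.cong[OF refl], simp add: Aij sum_distrib_left sum_distrib_right mult_ac)
    also have "\<dots> = (\<Sum>j<n. \<Sum>t\<in>T. \<Sum>i<n. cnj (U $$ (i,k)) * complex_of_real (l t i) * (complex_of_real (r t j) * U $$ (j,k)))"
      by (rule sum.cong[OF refl], rule sum.swap)
    also have "\<dots> = (\<Sum>t\<in>T. \<Sum>i<n. \<Sum>j<n. cnj (U $$ (i,k)) * complex_of_real (l t i) * (complex_of_real (r t j) * U $$ (j,k)))"
      by (rule sum_swap3)
    also have "\<dots> = (\<Sum>t\<in>T. cnj (\<alpha> t k) * \<beta> t k)"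
      unfolding \<alpha>_def \<beta>_def cnj_sum sum_product
      by (rule sum.cong[OF refl], rule sum.cong[OF refl], rule sum.cong[OF refl], simp add: mult_ac)
    finally show "es ! k = (\<Sum>t\<in>T. cnj (\<alpha> t k) * \<beta> t k)" .
  qed
  have "energy n E = (\<Sum>k<n. cmod (\<Sum>t\<in>T. cnj (\<alpha> t k) * \<beta> t k))"
    unfolding en by (rule sum.cong, simp_all add: lam)
  also have "\<dots> \<le> (\<Sum>k<n. \<Sum>t\<in>T. ((cmod (\<alpha> t k))^2 + (cmod (\<beta> t k))^2) / 2)"
  proof (rule sum_mono)
    fix k assume "k \<in> {..<n}"
    have "cmod (\<Sum>t\<in>T. cnj (\<alpha> t k) * \<beta> t k) \<le> (\<Sum>t\<in>T. cmod (cnj (\<alpha> t k) * \<beta> t k))"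
      by (rule norm_sum)
    also have "\<dots> \<le> (\<Sum>t\<in>T. ((cmod (\<alpha> t k))^2 + (cmod (\<beta> t k))^2) / 2)"
    proof (rule sum_mono)
      fix t assume "t \<in> T"
      have "0 \<le> (cmod (\<alpha> t k) - cmod (\<beta> t k))^2" by simp
      then show "cmod (cnj (\<alpha> t k) * \<beta> t k) \<le> ((cmod (\<alpha> t k))^2 + (cmod (\<beta> t k))^2) / 2"
        by (simp add: norm_mult power2_diff)
    qed
    finally show "cmod (\<Sum>t\<in>T. cnj (\<alpha> t k) * \<beta> t k) \<le> (\<Sum>t\<in>T. ((cmod (\<alpha> t k))^2 + (cmod (\<beta> t k))^2) / 2)" .
  qed
  also have "\<dots> = (\<Sum>t\<in>T. ((\<Sum>k<n. (cmod (\<alpha> t k))^2) + (\<Sum>k<n. (cmod (\<beta> t k))^2)) / 2)"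
    apply (rule trans[OF sum.swap])
    by (rule sum.cong[OF refl], simp add: sum.distrib add_divide_distrib sum_divide_distrib)
  also have "\<dots> = (\<Sum>t\<in>T. (\<Sum>i<n. (l t i)^2) + (\<Sum>i<n. (r t i)^2)) / 2"
    unfolding \<alpha>_def \<beta>_def parseval[OF U UU] by (simp only: sum_divide_distrib)
  finally show ?thesis .
qed



definition attach :: "nat list \<Rightarrow> nat \<Rightarrow> nat" where
  "attach pb s = (if s = 0 then length pb - 1 else length pb + 4 * s - 3)"

definition par :: "nat list \<Rightarrow> nat \<Rightarrow> nat" where
  "par pb v = (if v < length pb then pb ! v
     else if (v - length pb) mod 4 = 0 then attach pb ((v - length pb) div 4)
     else length pb + 4 * ((v - length pb) div 4))"

definition TE :: "nat list \<Rightarrow> nat \<Rightarrow> nat \<Rightarrow> nat \<Rightarrow> bool" where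
  "TE pb n i j \<longleftrightarrow> i < n \<and> j < n \<and> ((0 < i \<and> j = par pb i) \<or> (0 < j \<and> i = par pb j))"

definition hubok :: "nat \<Rightarrow> nat list \<Rightarrow> bool" where
  "hubok h pb \<longleftrightarrow> 0 < h \<and> h < length pb \<and> (\<forall>v\<in>{1..<h}. pb ! v < v) \<and> (\<forall>x\<in>{h..<length pb}. pb ! x < h)"

lemma par_lt:
  assumes hb: "hubok h pb" and v: "0 < v"
  shows "par pb v < v"
proof (cases "v < length pb")
  case True
  then have pv: "par pb v = pb ! v" by (simp add: par_def)
  show ?thesis
  proof (cases "v < h")
    case True then show ?thesis using hb v pv unfolding hubok_def by auto
  next
    case False
    have "pb ! v < h" using hb False \<open>v < length pb\<close> unfolding hubok_def by auto
    then show ?thesis using pv False by simp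
  qed
next
  case False
  have N: "length pb > 0" using hb unfolding hubok_def by auto
  define w where "w = v - length pb"
  have vw: "v = length pb + w" using False w_def by auto
  have dm: "w = 4 * (w div 4) + w mod 4" by simp
  show ?thesis
    using N unfolding par_def attach_def vw by (auto; presburger)
qed

lemma TE_sym: "TE pb n i j = TE pb n j i"
  unfolding TE_def by auto

lemma TE_simple: assumes "hubok h pb" shows "simple_graph n (TE pb n)"
  unfolding simple_graph_def
proof (intro allI impI)
  fix i j assume e: "TE pb n i j"
  then have "i \<noteq> j" using par_lt[OF assms] unfolding TE_def by (metis less_irrefl)
  then show "i < n \<and> j < n \<and> i \<noteq> j \<and> TE pb n j i" using e TE_sym[of pb n i j] unfolding TE_def by auto
qed

lemma TE_reach0: assumes "hubok h pb" shows "v < n \<Longrightarrow> (TE pb n)\<^sup>*\<^sup>* v 0"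
proof (induction v rule: less_induct)
  case (less v)
  show ?case
  proof (cases "v = 0")
    case True then show ?thesis by simp
  next
    case False
    then have p: "par pb v < v" using par_lt[OF assms] by auto
    have e: "TE pb n v (par pb v)" using p less(2) False unfolding TE_def by auto
    have "(TE pb n)\<^sup>*\<^sup>* (par pb v) 0" using less(1)[OF p] p less(2) by auto
    then show ?thesis using e by (meson converse_rtranclp_into_rtranclp)
  qed
qed

lemma TE_connected: assumes "hubok h pb" shows "graph_connected n (TE pb n)"
  unfolding graph_connected_def
proof (intro allI impI)
  fix u v assume u: "u < n" and v: "v < n"
  have 1: "(TE pb n)\<^sup>*\<^sup>* u 0" by (rule TE_reach0[OF assms u])
  have "(TE pb n)\<^sup>*\<^sup>* v 0" by (rule TE_reach0[OF assms v])
  then have "(TE pb n)\<inverse>\<inverse>\<^sup>*\<^sup>* 0 v" by (rule rtranclp_converseI)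
  moreover have "(TE pb n)\<inverse>\<inverse> = TE pb n" using TE_sym by (auto simp: fun_eq_iff)
  ultimately have "(TE pb n)\<^sup>*\<^sup>* 0 v" by simp
  with 1 show "(TE pb n)\<^sup>*\<^sup>* u v" by simp
qed

lemma no_cycle_generic:
  assumes sym: "\<And>i j. E i j \<Longrightarrow> E j i"
    and uniq: "\<And>i j k. E i j \<Longrightarrow> E i k \<Longrightarrow> j < i \<Longrightarrow> k < i \<Longrightarrow> j = k"
  shows "\<not> is_cycle n E vs"
proof
  assume c: "is_cycle n E vs"
  define L where "L = length vs"
  have L3: "L \<ge> 3" and dist: "distinct vs" and cons: "\<And>i. Suc i < L \<Longrightarrow> E (vs ! i) (vs ! Suc i)"
    and lh: "E (last vs) (hd vs)" using c unfolding is_cycle_def L_def by auto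
  have ne: "vs \<noteq> []" using L3 L_def by auto
  have adj: "\<And>q. q < L \<Longrightarrow> E (vs ! q) (vs ! ((q + 1) mod L))"
  proof -
    fix q assume q: "q < L"
    show "E (vs ! q) (vs ! ((q + 1) mod L))"
    proof (cases "Suc q < L")
      case True then show ?thesis using cons by simp
    next
      case False
      then have sq: "Suc q = L" using q by auto
      then have "q = L - 1" "(q + 1) mod L = 0" by auto
      then show ?thesis using lh ne unfolding L_def by (simp add: last_conv_nth hd_conv_nth)
    qed
  qed
  define m where "m = Max (set vs)"
  have "m \<in> set vs" unfolding m_def using ne by simp
  then obtain p where p: "p < L" "vs ! p = m" unfolding L_def by (metis in_set_conv_nth)
  have mx: "\<And>q. q < L \<Longrightarrow> vs ! q \<le> m" unfolding m_def L_def by simp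
  define pp where "pp = (p + (L - 1)) mod L"
  define nx where "nx = (p + 1) mod L"
  have pp_eq: "pp = (if p = 0 then L - 1 else p - 1)"
  proof (cases "p = 0")
    case True then show ?thesis unfolding pp_def using L3 by simp
  next
    case False
    then have e: "p + (L - 1) = (p - 1) + L" using L3 by simp
    have "((p - 1) + L) mod L = p - 1" using p by simp
    then show ?thesis unfolding pp_def e using False by simp
  qed
  have nx_eq: "nx = (if p = L - 1 then 0 else p + 1)"
    unfolding nx_def using p L3 by (auto simp: mod_if)
  have pp: "pp < L" "(pp + 1) mod L = p" using p L3 pp_eq by (auto simp: mod_if)
  have nx: "nx < L" using L3 p nx_eq by auto
  have pn: "pp \<noteq> nx" "pp \<noteq> p" "nx \<noteq> p" using p L3 pp_eq nx_eq by auto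
  have d1: "vs ! pp \<noteq> m" "vs ! nx \<noteq> m" "vs ! pp \<noteq> vs ! nx"
    using dist pp(1) nx p pn unfolding L_def by (auto simp: nth_eq_iff_index_eq)
  have e1: "E m (vs ! pp)" using adj[OF pp(1)] pp(2) p(2) sym by simp
  have e2: "E m (vs ! nx)" using adj[OF p(1)] p(2) unfolding nx_def by simp
  have "vs ! pp < m" "vs ! nx < m" using mx[OF pp(1)] mx[OF nx] d1 by auto
  then have "vs ! pp = vs ! nx" using uniq[OF e1 e2] by simp
  with d1 show False by simp
qed

lemma TE_no_cycle: assumes "hubok h pb" shows "\<not> is_cycle n (TE pb n) vs"
proof (rule no_cycle_generic)
  show "\<And>i j. TE pb n i j \<Longrightarrow> TE pb n j i" using TE_sym by blast
  fix i j k assume "TE pb n i j" "TE pb n i k" "j < i" "k < i"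
  moreover have "\<And>j. 0 < j \<Longrightarrow> par pb j < j" using par_lt[OF assms] by blast
  ultimately show "j = k" unfolding TE_def by (metis less_asym)
qed

lemma TE_tree: assumes "hubok h pb" shows "is_tree n (TE pb n)"
  unfolding is_tree_def using TE_simple[OF assms] TE_connected[OF assms] TE_no_cycle[OF assms] by blast

definition chc :: "nat list \<Rightarrow> nat \<Rightarrow> nat" where
  "chc pb v = length (filter (\<lambda>u. pb ! u = v) [1..<length pb])"

definition degok :: "nat list \<Rightarrow> bool" where
  "degok pb \<longleftrightarrow> chc pb 0 = 4 \<and> (\<forall>v\<in>{1..<length pb}. chc pb v \<le> 3)"

lemma card_children: "card {u\<in>{1..<length pb}. pb ! u = v} = chc pb v"
proof -
  have eq: "{u\<in>{1..<length pb}. pb ! u = v} = set (filter (\<lambda>u. pb ! u = v) [1..<length pb])" by auto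
  show ?thesis unfolding chc_def eq by (rule distinct_card, simp)
qed

lemma children_chain:
  assumes hb: "hubok h pb" and v: "length pb \<le> v" and u: "0 < u" and pu: "par pb u = v"
  shows "u \<in> {v+1, v+2, v+3}"
proof -
  have uv: "v < u" using par_lt[OF hb u] pu by simp
  define N where "N = length pb"
  have N: "N > 0" using hb unfolding hubok_def N_def by auto
  define w where "w = u - N"
  have uw: "u = N + w" using uv v unfolding w_def N_def by auto
  have dm: "w = 4 * (w div 4) + w mod 4" by simp
  have m4: "w mod 4 < 4" by simp
  show ?thesis
  proof (cases "w mod 4 = 0")
    case True
    show ?thesis
    proof (cases "w div 4 = 0")
      case True
      with \<open>w mod 4 = 0\<close> pu have "v = N - 1" unfolding par_def attach_def uw N_def[symmetric] by simp
      then show ?thesis using v N unfolding N_def by linarith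
    next
      case False
      with \<open>w mod 4 = 0\<close> pu have "v = N + 4 * (w div 4) - 3" unfolding par_def attach_def uw N_def[symmetric] by simp
      then show ?thesis using uw dm \<open>w mod 4 = 0\<close> False by simp
    qed
  next
    case False
    with pu have "v = N + 4 * (w div 4)" unfolding par_def uw N_def[symmetric] by simp
    then have "u = v + w mod 4" using uw dm by linarith
    moreover have "w mod 4 = 1 \<or> w mod 4 = 2 \<or> w mod 4 = 3" using m4 False by linarith
    ultimately show ?thesis by auto
  qed
qed

lemma children_base_ext:
  assumes hb: "hubok h pb" and v: "v < length pb" and u: "length pb \<le> u" and pu: "par pb u = v"
  shows "u = length pb \<and> v = length pb - 1"
proof -
  define N where "N = length pb"
  define w where "w = u - N"
  have uw: "u = N + w" using u unfolding w_def N_def by auto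
  show ?thesis
  proof (cases "w mod 4 = 0")
    case True
    show ?thesis
    proof (cases "w div 4 = 0")
      case True
      with \<open>w mod 4 = 0\<close> have "w = 0" by presburger
      then show ?thesis using pu uw unfolding par_def attach_def N_def by simp
    next
      case False
      with \<open>w mod 4 = 0\<close> pu have "v = N + 4 * (w div 4) - 3" unfolding par_def attach_def uw N_def[symmetric] by simp
      then show ?thesis using v False unfolding N_def by simp
    qed
  next
    case False
    with pu have "v = N + 4 * (w div 4)" unfolding par_def uw N_def[symmetric] by simp
    then show ?thesis using v unfolding N_def by simp
  qed
qed

lemma nbr_chain:
  assumes hb: "hubok h pb" and v: "length pb \<le> v"
  shows "{u. u < n \<and> TE pb n v u} \<subseteq> {par pb v, v+1, v+2, v+3}"
  using children_chain[OF hb v] unfolding TE_def by auto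

lemma nbr_base:
  assumes hb: "hubok h pb" and v: "v < length pb"
  shows "{u. u < n \<and> TE pb n v u} \<subseteq> {u. 0 < v \<and> u = pb ! v} \<union> {u\<in>{1..<length pb}. pb ! u = v} \<union> {u. u = length pb \<and> v = length pb - 1}"
proof
  fix u assume "u \<in> {u. u < n \<and> TE pb n v u}"
  then have e: "(0 < v \<and> u = par pb v) \<or> (0 < u \<and> v = par pb u)" unfolding TE_def by auto
  have pv: "par pb v = pb ! v" using v unfolding par_def by simp
  show "u \<in> {u. 0 < v \<and> u = pb ! v} \<union> {u\<in>{1..<length pb}. pb ! u = v} \<union> {u. u = length pb \<and> v = length pb - 1}"
  proof (cases "0 < v \<and> u = par pb v")
    case True then show ?thesis using pv by auto
  next
    case False
    then have u0: "0 < u" and vu: "v = par pb u" using e by auto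
    show ?thesis
    proof (cases "u < length pb")
      case True then have "pb ! u = v" using vu unfolding par_def by simp
      then show ?thesis using True u0 by auto
    next
      case False
      then show ?thesis using children_base_ext[OF hb v _ vu[symmetric]] by auto
    qed
  qed
qed

lemma card4: "card {a, b, c, d :: nat} \<le> 4"
  by (auto simp: card_insert_if)

lemma TE_deg_le:
  assumes hb: "hubok h pb" and dg: "degok pb" and v: "v < n"
  shows "degree_of n (TE pb n) v \<le> 4"
proof -
  define N where "N = length pb"
  have N2: "N \<ge> 2" "h \<le> N - 1" using hb unfolding hubok_def N_def by auto
  define S where "S = {u. u < n \<and> TE pb n v u}"
  have fS: "finite S" unfolding S_def by auto
  show ?thesis
  proof (cases "N \<le> v")
    case True
    have "card S \<le> card {par pb v, v+1, v+2, v+3}"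
      by (rule card_mono, simp, unfold S_def, rule nbr_chain[OF hb True[unfolded N_def]])
    also have "\<dots> \<le> 4" by (rule card4)
    finally show ?thesis unfolding degree_of_def S_def .
  next
    case False
    then have vN: "v < N" by simp
    define A where "A = {u. 0 < v \<and> u = pb ! v}"
    define B where "B = {u\<in>{1..<N}. pb ! u = v}"
    define C where "C = {u. u = N \<and> v = N - 1}"
    have sub: "S \<subseteq> A \<union> B \<union> C" unfolding S_def A_def B_def C_def N_def
      by (rule nbr_base[OF hb vN[unfolded N_def]])
    have fA: "finite A" "card A \<le> 1" unfolding A_def by (auto simp: card_le_Suc0_iff_eq)
    have fC: "finite C" "card C \<le> 1" unfolding C_def by (auto simp: card_le_Suc0_iff_eq)
    have fB: "finite B" "card B = chc pb v" unfolding B_def N_def using card_children by auto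
    have "card S \<le> card (A \<union> B \<union> C)" using card_mono[OF _ sub] fA fB fC by auto
    also have "\<dots> \<le> card A + card B + card C"
      by (meson card_Un_le add_le_mono1 order_trans)
    finally have cS: "card S \<le> card A + card B + card C" .
    show ?thesis
    proof (cases "v = 0")
      case True
      then have "A = {}" "C = {}" unfolding A_def C_def using N2 by auto
      moreover have "card B = 4" using fB dg True unfolding degok_def by simp
      ultimately show ?thesis using cS unfolding degree_of_def S_def by simp
    next
      case v0: False
      show ?thesis
      proof (cases "v = N - 1")
        case True
        have "B = {}"
        proof -
          { fix u assume u: "u \<in> {1..<N}" "pb ! u = v"
            have "pb ! u < h"
            proof (cases "u < h")
              case True then have "pb ! u < u" using hb u unfolding hubok_def by auto
              then show ?thesis using True by simp
            next
              case False then show ?thesis using hb u unfolding hubok_def N_def by auto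
            qed
            then have False using u True N2 by simp }
          then show ?thesis unfolding B_def by auto
        qed
        then show ?thesis using cS fA fC unfolding degree_of_def S_def by simp
      next
        case False
        then have "C = {}" unfolding C_def by auto
        moreover have "card B \<le> 3" using fB dg v0 vN unfolding degok_def N_def by auto
        ultimately show ?thesis using cS fA unfolding degree_of_def S_def by simp
      qed
    qed
  qed
qed

lemma TE_deg0:
  assumes hb: "hubok h pb" and dg: "degok pb" and n: "length pb \<le> n"
  shows "degree_of n (TE pb n) 0 = 4"
proof -
  define N where "N = length pb"
  have N2: "N \<ge> 2" using hb unfolding hubok_def N_def by auto
  have "{u. u < n \<and> TE pb n 0 u} = {u\<in>{1..<N}. pb ! u = 0}"
  proof
    have s: "{u. u < n \<and> TE pb n 0 u} \<subseteq> {u. 0 < (0::nat) \<and> u = pb ! 0} \<union> {u\<in>{1..<N}. pb ! u = 0} \<union> {u. u = N \<and> 0 = N - 1}"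
      unfolding N_def by (rule nbr_base[OF hb], use N2 in \<open>auto simp add: N_def\<close>)
    show "{u. u < n \<and> TE pb n 0 u} \<subseteq> {u\<in>{1..<N}. pb ! u = 0}"
      using s N2 by auto
    show "{u\<in>{1..<N}. pb ! u = 0} \<subseteq> {u. u < n \<and> TE pb n 0 u}"
      using n unfolding TE_def par_def N_def by auto
  qed
  then show ?thesis unfolding degree_of_def using card_children[of pb 0] dg unfolding degok_def N_def by simp
qed

lemma TE_maxdeg:
  assumes hb: "hubok h pb" and dg: "degok pb" and n: "length pb \<le> n"
  shows "max_degree n (TE pb n) = 4"
  unfolding max_degree_def
proof (rule Max_eqI)
  show "finite (degree_of n (TE pb n) ` {..<n})" by simp
  show "\<And>y. y \<in> degree_of n (TE pb n) ` {..<n} \<Longrightarrow> y \<le> 4" using TE_deg_le[OF hb dg] by auto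
  have "0 < n" using hb n unfolding hubok_def by auto
  then show "4 \<in> degree_of n (TE pb n) ` {..<n}" using TE_deg0[OF hb dg n] by force
qed



definition tau :: "nat \<Rightarrow> nat list \<Rightarrow> nat \<Rightarrow> nat" where
  "tau h pb i = (if i < h then i else h + pb ! i)"

definition ETy :: "nat \<Rightarrow> nat list \<Rightarrow> nat \<Rightarrow> nat \<Rightarrow> bool" where
  "ETy h pb a b = (if a < h \<and> b < h then (0 < a \<and> b = pb ! a) \<or> (0 < b \<and> a = pb ! b)
      else (a < h \<and> b = h + a) \<or> (b < h \<and> a = h + b))"

definition lkr :: "(nat \<times> rat) list \<Rightarrow> nat \<Rightarrow> rat" where
  "lkr xs a = (case map_of xs a of Some x \<Rightarrow> x | None \<Rightarrow> 0)"

type_synonym cert = "((nat \<times> rat) list \<times> (nat \<times> rat) list) list"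

definition chk_id :: "nat \<Rightarrow> nat list \<Rightarrow> nat list \<Rightarrow> nat list \<Rightarrow> cert \<Rightarrow> bool" where
  "chk_id h pb BT WT C \<longleftrightarrow> (\<forall>a\<in>set BT. \<forall>b\<in>set WT.
     (if ETy h pb a b then 1 else 0) = sum_list (map (\<lambda>(L,R). lkr L a * lkr R b) C))"

definition chk_aux :: "nat \<Rightarrow> nat list \<Rightarrow> nat list \<Rightarrow> nat list \<Rightarrow> cert \<Rightarrow> bool" where
  "chk_aux h pb BT WT C \<longleftrightarrow> (\<forall>a\<in>set BT. \<forall>b\<in>set BT. \<not> ETy h pb a b) \<and> (\<forall>a\<in>set WT. \<forall>b\<in>set WT. \<not> ETy h pb a b)
     \<and> (\<forall>a\<in>set BT. a \<notin> set WT) \<and> (\<forall>p\<in>set C. fst ` set (fst p) \<subseteq> set BT \<and> fst ` set (snd p) \<subseteq> set WT)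
     \<and> (\<forall>i\<in>{0..<length pb}. tau h pb i \<in> set BT \<union> set WT)"

definition costc :: "nat \<Rightarrow> nat list \<Rightarrow> cert \<Rightarrow> rat" where
  "costc h pb C = sum_list (map (\<lambda>(L,R). sum_list (map (\<lambda>i. (lkr L (tau h pb i))^2 + (lkr R (tau h pb i))^2) [0..<length pb])) C)"

lemma ETy_sym: "ETy h pb a b = ETy h pb b a"
  unfolding ETy_def by auto

lemma TE_ETy:
  assumes hb: "hubok h pb" and i: "i < length pb" and j: "j < length pb"
  shows "TE pb (length pb) i j \<longleftrightarrow> ETy h pb (tau h pb i) (tau h pb j)"
proof -
  have pi: "par pb i = pb ! i" "par pb j = pb ! j" using i j unfolding par_def by auto
  have h0: "0 < h" using hb unfolding hubok_def by auto
  have hubp: "\<And>v. 0 < v \<Longrightarrow> v < h \<Longrightarrow> pb ! v < v" using hb unfolding hubok_def by auto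
  have leafp: "\<And>x. h \<le> x \<Longrightarrow> x < length pb \<Longrightarrow> pb ! x < h" using hb unfolding hubok_def by auto
  show ?thesis
  proof (cases "i < h")
    case ih: True
    show ?thesis
    proof (cases "j < h")
      case True then show ?thesis using ih i j pi unfolding TE_def ETy_def tau_def by auto
    next
      case False
      have "pb ! j < h" using leafp False j by simp
      moreover have "0 < i \<Longrightarrow> pb ! i < i" using hubp ih by simp
      ultimately show ?thesis using ih False i j pi h0 unfolding TE_def ETy_def tau_def by auto
    qed
  next
    case inh: False
    have li: "pb ! i < h" using leafp inh i by simp
    show ?thesis
    proof (cases "j < h")
      case True
      have "0 < j \<Longrightarrow> pb ! j < j" using hubp True by simp
      then show ?thesis using inh True i j pi h0 li unfolding TE_def ETy_def tau_def by auto
    next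
      case False
      have "pb ! j < h" using leafp False j by simp
      then show ?thesis using inh False li i j pi unfolding TE_def ETy_def tau_def by auto
    qed
  qed
qed

lemma lkr_notin: assumes "a \<notin> fst ` set L" shows "lkr L a = 0"
proof -
  have "map_of L a = None" using assms by (simp add: map_of_eq_None_iff)
  then show ?thesis unfolding lkr_def by simp
qed

lemma base_identity:
  assumes hb: "hubok h pb" and ci: "chk_id h pb BT WT C" and ca: "chk_aux h pb BT WT C"
    and i: "i < length pb" and j: "j < length pb"
  shows "(if TE pb (length pb) i j then 1 else 0)
    = sum_list (map (\<lambda>(L,R). lkr L (tau h pb i) * lkr R (tau h pb j) + lkr R (tau h pb i) * lkr L (tau h pb j)) C)"
proof -
  define a where "a = tau h pb i"
  define b where "b = tau h pb j"
  define F where "F x y = sum_list (map (\<lambda>(L,R). lkr L x * lkr R y) C)" for x y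
  have split: "sum_list (map (\<lambda>(L,R). lkr L a * lkr R b + lkr R a * lkr L b) C) = F a b + F b a"
    unfolding F_def by (induct C, auto simp: mult.commute)
  have ab: "a \<in> set BT \<union> set WT" "b \<in> set BT \<union> set WT" using ca i j unfolding chk_aux_def a_def b_def by auto
  have disj: "\<And>x. x \<in> set BT \<Longrightarrow> x \<notin> set WT" using ca unfolding chk_aux_def by auto
  have keys: "\<And>L R. (L,R) \<in> set C \<Longrightarrow> fst ` set L \<subseteq> set BT \<and> fst ` set R \<subseteq> set WT"
    using ca unfolding chk_aux_def by force
  have Fz1: "F x y = 0" if "x \<notin> set BT" for x y
  proof -
    have "\<And>p. p \<in> set C \<Longrightarrow> (\<lambda>(L,R). lkr L x * lkr R y) p = 0"
      using keys that lkr_notin by fastforce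
    then show ?thesis unfolding F_def by (induct C) auto
  qed
  have Fz2: "F x y = 0" if "y \<notin> set WT" for x y
  proof -
    have "\<And>p. p \<in> set C \<Longrightarrow> (\<lambda>(L,R). lkr L x * lkr R y) p = 0"
      using keys that lkr_notin by fastforce
    then show ?thesis unfolding F_def by (induct C) auto
  qed
  have "(if TE pb (length pb) i j then 1 else 0) = (if ETy h pb a b then (1::rat) else 0)"
    using TE_ETy[OF hb i j] unfolding a_def b_def by simp
  also have "\<dots> = F a b + F b a"
  proof (cases "a \<in> set BT")
    case aB: True
    show ?thesis
    proof (cases "b \<in> set WT")
      case True
      have "F a b = (if ETy h pb a b then 1 else 0)" using ci aB True unfolding chk_id_def F_def by auto
      moreover have "F b a = 0" using Fz2[of a b] disj[OF aB] by simp
      ultimately show ?thesis by simp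
    next
      case False
      then have "b \<in> set BT" using ab by auto
      then have "\<not> ETy h pb a b" using ca aB unfolding chk_aux_def by auto
      then show ?thesis using Fz2[of b a] Fz2[of a b] disj aB False by auto
    qed
  next
    case aW: False
    then have aW': "a \<in> set WT" using ab by auto
    show ?thesis
    proof (cases "b \<in> set BT")
      case True
      have "F b a = (if ETy h pb b a then 1 else 0)" using ci aW' True unfolding chk_id_def F_def by auto
      moreover have "F a b = 0" using Fz1[of a b] aW by simp
      ultimately show ?thesis using ETy_sym by simp
    next
      case False
      then have "b \<in> set WT" using ab by auto
      then have "\<not> ETy h pb a b" using ca aW' unfolding chk_aux_def by auto
      then show ?thesis using Fz1[of a b] Fz1[of b a] aW False by auto
    qed
  qed
  finally have "(if TE pb (length pb) i j then 1 else 0) = F a b + F b a" .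
  then show ?thesis using split unfolding a_def b_def by simp
qed

definition cs :: "nat list \<Rightarrow> nat \<Rightarrow> nat" where "cs pb s = length pb + 4 * s"
definition Ls :: "nat list \<Rightarrow> nat \<Rightarrow> nat set" where
  "Ls pb s = {attach pb s, cs pb s + 1, cs pb s + 2, cs pb s + 3}"

lemma attach_lt: "0 < length pb \<Longrightarrow> attach pb s < cs pb s"
  unfolding attach_def cs_def by auto

lemma par_cs: "par pb (cs pb s) = attach pb s"
  unfolding par_def cs_def by simp

lemma par_cs_r: "r \<in> {1,2,3} \<Longrightarrow> par pb (cs pb s + r) = cs pb s"
  unfolding par_def cs_def by auto

lemma cs_notin_Ls: assumes "0 < length pb" shows "cs pb s' \<notin> Ls pb s"
proof
  assume "cs pb s' \<in> Ls pb s"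
  then have "length pb + 4 * s' \<in> {attach pb s, length pb + 4 * s + 1, length pb + 4 * s + 2, length pb + 4 * s + 3}"
    unfolding Ls_def cs_def .
  then have "length pb + 4 * s' = attach pb s \<or> 4 * s' = 4 * s + 1 \<or> 4 * s' = 4 * s + 2 \<or> 4 * s' = 4 * s + 3"
    by auto
  then show False
  proof (elim disjE)
    assume a: "length pb + 4 * s' = attach pb s"
    show False
    proof (cases "s = 0")
      case True then have "length pb + 4 * s' = length pb - 1" using a unfolding attach_def by simp
      then show False using assms by linarith
    next
      case False then have "4 * s' + 3 = 4 * s" using a unfolding attach_def by simp
      then show False by presburger
    qed
  qed presburger+
qed

lemma Ls_lt: assumes "0 < length pb" "x \<in> Ls pb s" shows "x < cs pb (Suc s)"
  using assms attach_lt[OF assms(1), of s] unfolding Ls_def cs_def by auto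

lemma ed_chain:
  assumes hb: "hubok h pb" and n: "n = length pb + 4 * k" and u0: "0 < u" and un: "u < n"
    and nb: "\<not> (u < length pb \<and> w < length pb)" and w: "w = par pb u"
  shows "(\<exists>s<k. u = cs pb s \<and> w \<in> Ls pb s) \<or> (\<exists>s<k. u \<in> Ls pb s \<and> w = cs pb s)"
proof -
  define N where "N = length pb"
  have uN: "N \<le> u"
  proof (rule ccontr)
    assume "\<not> N \<le> u"
    then have u: "u < N" by simp
    then have "w = pb ! u" using w unfolding par_def N_def by simp
    moreover have "pb ! u < N"
    proof (cases "u < h")
      case True then have "pb ! u < u" using hb u0 unfolding hubok_def by auto
      then show ?thesis using u by simp
    next
      case False
      have "pb ! u < h" "h < N" using hb u False unfolding hubok_def N_def by auto
      then show ?thesis by simp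
    qed
    ultimately show False using nb u unfolding N_def by simp
  qed
  define s where "s = (u - N) div 4"
  define r where "r = (u - N) mod 4"
  have us: "u = cs pb s + r" unfolding cs_def s_def r_def N_def[symmetric] using uN by simp
  have sk: "s < k" using un n uN unfolding s_def N_def by auto
  show ?thesis
  proof (cases "r = 0")
    case True
    then have "w = attach pb s" using w us par_cs by simp
    then show ?thesis using True us sk unfolding Ls_def by auto
  next
    case False
    then have "r \<in> {1,2,3}" unfolding r_def by auto
    then have "w = cs pb s" using w us par_cs_r by simp
    moreover have "u \<in> Ls pb s" using us \<open>r \<in> {1,2,3}\<close> unfolding Ls_def by auto
    ultimately show ?thesis using sk by auto
  qed
qed

lemma chain_edges:
  assumes hb: "hubok h pb" and n: "n = length pb + 4 * k" and i: "i < n" and j: "j < n"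
    and nb: "\<not> (i < length pb \<and> j < length pb)"
  shows "TE pb n i j \<longleftrightarrow> (\<exists>s<k. i = cs pb s \<and> j \<in> Ls pb s) \<or> (\<exists>s<k. i \<in> Ls pb s \<and> j = cs pb s)"
proof
  assume "TE pb n i j"
  then have "(0 < i \<and> j = par pb i) \<or> (0 < j \<and> i = par pb j)" unfolding TE_def by auto
  then show "(\<exists>s<k. i = cs pb s \<and> j \<in> Ls pb s) \<or> (\<exists>s<k. i \<in> Ls pb s \<and> j = cs pb s)"
  proof
    assume "0 < i \<and> j = par pb i"
    then show ?thesis using ed_chain[OF hb n _ i nb] by blast
  next
    assume a: "0 < j \<and> i = par pb j"
    have "\<not> (j < length pb \<and> i < length pb)" using nb by auto
    then show ?thesis using ed_chain[OF hb n _ j, of i] a by blast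
  qed
next
  have N0: "0 < length pb" using hb unfolding hubok_def by auto
  have cpos: "\<And>s. 0 < cs pb s" using N0 unfolding cs_def by auto
  have Lpos: "\<And>s x. x \<in> Ls pb s \<Longrightarrow> x \<noteq> attach pb s \<Longrightarrow> 0 < x \<and> par pb x = cs pb s"
  proof -
    fix s x assume "x \<in> Ls pb s" "x \<noteq> attach pb s"
    then obtain r where "r \<in> {1,2,3}" "x = cs pb s + r" unfolding Ls_def by auto
    then show "0 < x \<and> par pb x = cs pb s" using par_cs_r by auto
  qed
  assume "(\<exists>s<k. i = cs pb s \<and> j \<in> Ls pb s) \<or> (\<exists>s<k. i \<in> Ls pb s \<and> j = cs pb s)"
  then show "TE pb n i j"
  proof
    assume "\<exists>s<k. i = cs pb s \<and> j \<in> Ls pb s"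
    then obtain s where s: "i = cs pb s" "j \<in> Ls pb s" by auto
    show ?thesis
    proof (cases "j = attach pb s")
      case True then show ?thesis using s i j cpos par_cs unfolding TE_def by auto
    next
      case False then show ?thesis using s i j Lpos[OF s(2)] unfolding TE_def by auto
    qed
  next
    assume "\<exists>s<k. i \<in> Ls pb s \<and> j = cs pb s"
    then obtain s where s: "j = cs pb s" "i \<in> Ls pb s" by auto
    show ?thesis
    proof (cases "i = attach pb s")
      case True then show ?thesis using s i j cpos par_cs unfolding TE_def by auto
    next
      case False then show ?thesis using s i j Lpos[OF s(2)] unfolding TE_def by auto
    qed
  qed
qed

lemma sum_unique_ind:
  assumes "finite A" and u: "\<And>s s'. P s \<Longrightarrow> P s' \<Longrightarrow> s = s'"
  shows "(\<Sum>s\<in>A. if P s then (1::real) else 0) = (if \<exists>s\<in>A. P s then 1 else 0)"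
proof (cases "\<exists>s\<in>A. P s")
  case True
  then obtain s0 where s0: "s0 \<in> A" "P s0" by auto
  have "(\<Sum>s\<in>A. if P s then (1::real) else 0) = (\<Sum>s\<in>A. if s = s0 then 1 else 0)"
    by (rule sum.cong, simp, use u s0 in auto)
  also have "\<dots> = 1" using assms(1) s0 by simp
  finally show ?thesis using True by simp
next
  case False then show ?thesis by simp
qed

lemma star_sum:
  assumes hb: "hubok h pb" and n: "n = length pb + 4 * k" and i: "i < n" and j: "j < n"
  shows "(\<Sum>s<k. (if i = cs pb s \<and> j \<in> Ls pb s then 1 else 0) + (if i \<in> Ls pb s \<and> j = cs pb s then (1::real) else 0))
     = (if i < length pb \<and> j < length pb then 0 else if TE pb n i j then 1 else 0)"
proof -
  have N0: "0 < length pb" using hb unfolding hubok_def by auto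
  have "(\<Sum>s<k. (if i = cs pb s \<and> j \<in> Ls pb s then 1 else 0) + (if i \<in> Ls pb s \<and> j = cs pb s then (1::real) else 0))
    = (\<Sum>s<k. if i = cs pb s \<and> j \<in> Ls pb s then 1 else 0) + (\<Sum>s<k. if i \<in> Ls pb s \<and> j = cs pb s then (1::real) else 0)"
    by (rule sum.distrib)
  also have "\<dots> = (if \<exists>s\<in>{..<k}. i = cs pb s \<and> j \<in> Ls pb s then 1 else 0) + (if \<exists>s\<in>{..<k}. i \<in> Ls pb s \<and> j = cs pb s then 1 else 0)"
    by (subst sum_unique_ind, simp, simp add: cs_def, subst sum_unique_ind, simp, auto simp add: cs_def)
  also have "\<dots> = (if i < length pb \<and> j < length pb then 0 else if TE pb n i j then 1 else 0)"
  proof (cases "i < length pb \<and> j < length pb")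
    case True
    then have "\<And>s. i \<noteq> cs pb s" "\<And>s. j \<noteq> cs pb s" unfolding cs_def by auto
    then show ?thesis using True by auto
  next
    case False
    have nd: "\<not> ((\<exists>s\<in>{..<k}. i = cs pb s \<and> j \<in> Ls pb s) \<and> (\<exists>s\<in>{..<k}. i \<in> Ls pb s \<and> j = cs pb s))"
      using cs_notin_Ls[OF N0] by blast
    show ?thesis using chain_edges[OF hb n i j False] nd False by auto
  qed
  finally show ?thesis .
qed

definition lfun :: "nat \<Rightarrow> nat list \<Rightarrow> cert \<Rightarrow> (nat \<times> bool) + (nat \<times> bool) \<Rightarrow> nat \<Rightarrow> real" where
  "lfun h pb C x i = (case x of
     Inl (t, b) \<Rightarrow> (if i < length pb then of_rat (lkr (if b then snd (C!t) else fst (C!t)) (tau h pb i)) else 0)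
   | Inr (s, b) \<Rightarrow> (if b then (if i \<in> Ls pb s then 1 / sqrt 2 else 0) else (if i = cs pb s then sqrt 2 else 0)))"

definition rfun :: "nat \<Rightarrow> nat list \<Rightarrow> cert \<Rightarrow> (nat \<times> bool) + (nat \<times> bool) \<Rightarrow> nat \<Rightarrow> real" where
  "rfun h pb C x j = (case x of
     Inl (t, b) \<Rightarrow> (if j < length pb then of_rat (lkr (if b then fst (C!t) else snd (C!t)) (tau h pb j)) else 0)
   | Inr (s, b) \<Rightarrow> (if b then (if j = cs pb s then sqrt 2 else 0) else (if j \<in> Ls pb s then 1 / sqrt 2 else 0)))"

lemma sum_bool: "(\<Sum>b\<in>(UNIV::bool set). g b) = g False + g True"
  by (simp add: UNIV_bool)

lemma sum_prod_bool: "(\<Sum>x\<in>A \<times> (UNIV::bool set). g x) = (\<Sum>t\<in>A. g (t, False) + g (t, True))"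
proof -
  have "(\<Sum>x\<in>A \<times> (UNIV::bool set). g x) = (\<Sum>(t,b)\<in>A \<times> (UNIV::bool set). g (t,b))" by simp
  also have "\<dots> = (\<Sum>t\<in>A. \<Sum>b\<in>UNIV. g (t,b))" by (rule sum.cartesian_product[symmetric])
  also have "\<dots> = (\<Sum>t\<in>A. g (t, False) + g (t, True))" by (simp add: sum_bool)
  finally show ?thesis .
qed

lemma TE_restrict: "i < N \<Longrightarrow> j < N \<Longrightarrow> N \<le> n \<Longrightarrow> TE pb n i j = TE pb N i j"
  unfolding TE_def by auto

lemma sum_list_nth_map: "sum_list (map f C) = (\<Sum>t<length C. f (C ! t))"
  by (simp add: sum_list_sum_nth atLeast0LessThan)

lemma factor_identity:
  assumes hb: "hubok h pb" and ci: "chk_id h pb BT WT C" and ca: "chk_aux h pb BT WT C"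
    and n: "n = length pb + 4 * k" and i: "i < n" and j: "j < n"
  shows "(if TE pb n i j then 1 else 0) = (\<Sum>x\<in>({..<length C} \<times> UNIV) <+> ({..<k} \<times> UNIV). lfun h pb C x i * rfun h pb C x j)"
proof -
  define N where "N = length pb"
  have base: "(\<Sum>t<length C. lfun h pb C (Inl (t, False)) i * rfun h pb C (Inl (t, False)) j + lfun h pb C (Inl (t, True)) i * rfun h pb C (Inl (t, True)) j)
     = (if i < N \<and> j < N then (if TE pb N i j then 1 else 0) else 0)"
  proof (cases "i < N \<and> j < N")
    case True
    have "(\<Sum>t<length C. lfun h pb C (Inl (t, False)) i * rfun h pb C (Inl (t, False)) j + lfun h pb C (Inl (t, True)) i * rfun h pb C (Inl (t, True)) j)
      = of_rat (\<Sum>t<length C. (\<lambda>(L,R). lkr L (tau h pb i) * lkr R (tau h pb j) + lkr R (tau h pb i) * lkr L (tau h pb j)) (C ! t))"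
      unfolding of_rat_sum using True unfolding N_def
      by (intro sum.cong refl, auto simp: lfun_def rfun_def of_rat_add of_rat_mult split: prod.splits)
    also have "\<dots> = of_rat (if TE pb N i j then 1 else 0)"
      using base_identity[OF hb ci ca, of i j] True unfolding N_def sum_list_nth_map by simp
    finally show ?thesis using True by simp
  next
    case False
    then show ?thesis unfolding lfun_def rfun_def N_def by auto
  qed
  have star: "(\<Sum>s<k. lfun h pb C (Inr (s, False)) i * rfun h pb C (Inr (s, False)) j + lfun h pb C (Inr (s, True)) i * rfun h pb C (Inr (s, True)) j)
     = (\<Sum>s<k. (if i = cs pb s \<and> j \<in> Ls pb s then 1 else 0) + (if i \<in> Ls pb s \<and> j = cs pb s then (1::real) else 0))"
    by (intro sum.cong refl, simp add: lfun_def rfun_def)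
  have "(\<Sum>x\<in>({..<length C} \<times> UNIV) <+> ({..<k} \<times> UNIV). lfun h pb C x i * rfun h pb C x j)
    = (\<Sum>t<length C. lfun h pb C (Inl (t, False)) i * rfun h pb C (Inl (t, False)) j + lfun h pb C (Inl (t, True)) i * rfun h pb C (Inl (t, True)) j)
    + (\<Sum>s<k. lfun h pb C (Inr (s, False)) i * rfun h pb C (Inr (s, False)) j + lfun h pb C (Inr (s, True)) i * rfun h pb C (Inr (s, True)) j)"
    by (simp add: sum.Plus sum_prod_bool)
  also have "\<dots> = (if TE pb n i j then 1 else 0)"
    unfolding base star star_sum[OF hb n i j] N_def[symmetric]
    using TE_restrict[of i N j n pb] n unfolding N_def by auto
  finally show ?thesis by simp
qed

lemma sq_if: "(if P then a else (0::real))^2 = (if P then a^2 else 0)"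
  by simp

lemma sum_restrict_sq:
  fixes N n :: nat
  assumes "N \<le> n"
  shows "(\<Sum>i<n. (if i < N then f i else (0::real))^2) = (\<Sum>i<N. (f i)^2)"
proof -
  have "(\<Sum>i<n. (if i < N then f i else (0::real))^2) = (\<Sum>i<n. if i \<in> {..<N} then (f i)^2 else 0)"
    by (rule sum.cong, auto)
  also have "\<dots> = (\<Sum>i\<in>{..<n} \<inter> {..<N}. (f i)^2)" by (subst sum.inter_restrict) auto
  also have "{..<n} \<inter> {..<N} = {..<N}" using assms by auto
  finally show ?thesis .
qed

lemma card_Ls: "0 < length pb \<Longrightarrow> card (Ls pb s) = 4"
  using attach_lt[of pb s] unfolding Ls_def by (simp add: card_insert_if)

lemma sum_Ls:
  assumes N0: "0 < length pb" and n: "n = length pb + 4 * k" and s: "s < k"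
  shows "(\<Sum>i<n. if i \<in> Ls pb s then x else (0::real)) = 4 * x"
proof -
  have sub: "Ls pb s \<subseteq> {..<n}"
  proof
    fix y assume "y \<in> Ls pb s"
    then have "y < cs pb (Suc s)" by (rule Ls_lt[OF N0])
    then show "y \<in> {..<n}" using n s unfolding cs_def by auto
  qed
  have "(\<Sum>i<n. if i \<in> Ls pb s then x else (0::real)) = (\<Sum>i\<in>{..<n} \<inter> Ls pb s. x)"
    by (rule sum.inter_restrict[symmetric], simp)
  also have "{..<n} \<inter> Ls pb s = Ls pb s" using sub by auto
  finally show ?thesis using card_Ls[OF N0] by simp
qed

lemma cost_value:
  assumes hb: "hubok h pb" and n: "n = length pb + 4 * k"
  shows "(\<Sum>x\<in>({..<length C} \<times> UNIV) <+> ({..<k} \<times> UNIV). (\<Sum>i<n. (lfun h pb C x i)^2) + (\<Sum>i<n. (rfun h pb C x i)^2))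
    = 2 * of_rat (costc h pb C) + 8 * real k"
proof -
  define N where "N = length pb"
  have N0: "0 < N" using hb unfolding hubok_def N_def by auto
  have Nn: "N \<le> n" using n unfolding N_def by simp
  define g where "g x = (\<Sum>i<n. (lfun h pb C x i)^2) + (\<Sum>i<n. (rfun h pb C x i)^2)" for x
  define cc where "cc p = (case p of (L,R) \<Rightarrow> (\<Sum>i<N. (lkr L (tau h pb i))^2 + (lkr R (tau h pb i))^2))" for p
  have base_t: "g (Inl (t,False)) + g (Inl (t,True)) = 2 * of_rat (cc (C ! t))" for t
  proof -
    obtain L R where LR: "C ! t = (L, R)" by (cases "C ! t")
    have a: "(\<Sum>i<n. (lfun h pb C (Inl (t,b)) i)^2) = (\<Sum>i<N. (of_rat (lkr (if b then R else L) (tau h pb i)))^2)" for b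
      unfolding lfun_def N_def by (simp add: LR sum_restrict_sq[OF Nn[unfolded N_def]])
    have c: "(\<Sum>i<n. (rfun h pb C (Inl (t,b)) i)^2) = (\<Sum>i<N. (of_rat (lkr (if b then L else R) (tau h pb i)))^2)" for b
      unfolding rfun_def N_def by (simp add: LR sum_restrict_sq[OF Nn[unfolded N_def]])
    show ?thesis unfolding g_def a c cc_def LR
      by (simp add: of_rat_sum of_rat_add of_rat_power sum.distrib)
  qed
  have star_s: "g (Inr (s,False)) + g (Inr (s,True)) = 8" if sk: "s < k" for s
  proof -
    have cn: "cs pb s < n" using n sk unfolding cs_def by simp
    have d: "(\<Sum>i<n. (if i = cs pb s then sqrt 2 else (0::real))^2) = 2"
      unfolding sq_if using cn by (simp add: sum.delta)
    have e: "(\<Sum>i<n. (if i \<in> Ls pb s then 1 / sqrt 2 else (0::real))^2) = 2"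
      unfolding sq_if using sum_Ls[OF N0[unfolded N_def] n sk, of "(1 / sqrt 2)^2"] by (simp add: power_divide)
    show ?thesis unfolding g_def lfun_def rfun_def using d e by simp
  qed
  have "(\<Sum>x\<in>({..<length C} \<times> UNIV) <+> ({..<k} \<times> UNIV). g x)
      = (\<Sum>t<length C. g (Inl (t,False)) + g (Inl (t,True))) + (\<Sum>s<k. g (Inr (s,False)) + g (Inr (s,True)))"
    by (simp add: sum.Plus sum_prod_bool)
  also have "\<dots> = (\<Sum>t<length C. 2 * of_rat (cc (C ! t))) + (\<Sum>s<k. 8)"
    using base_t star_s by simp
  also have "(\<Sum>t<length C. 2 * of_rat (cc (C ! t))) = 2 * of_rat (costc h pb C)"
  proof -
    have "costc h pb C = (\<Sum>t<length C. cc (C ! t))"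
      unfolding costc_def sum_list_nth_map cc_def N_def
      by (intro sum.cong refl, auto simp: interv_sum_list_conv_sum_set_nat atLeast0LessThan split: prod.splits)
    then show ?thesis by (simp add: of_rat_sum sum_distrib_left)
  qed
  finally show ?thesis unfolding g_def by simp
qed

lemma TE_energy:
  assumes hb: "hubok h pb" and ci: "chk_id h pb BT WT C" and ca: "chk_aux h pb BT WT C"
    and cost: "costc h pb C < of_nat (length pb) - 1"
    and n: "n = length pb + 4 * k"
  shows "energy n (TE pb n) < real n - 1"
proof -
  have "energy n (TE pb n) \<le> (\<Sum>x\<in>({..<length C} \<times> UNIV) <+> ({..<k} \<times> UNIV). (\<Sum>i<n. (lfun h pb C x i)^2) + (\<Sum>i<n. (rfun h pb C x i)^2)) / 2"
    by (rule energy_bound, simp, rule factor_identity[OF hb ci ca n])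
  also have "\<dots> = of_rat (costc h pb C) + 4 * real k"
    unfolding cost_value[OF hb n] by simp
  also have "\<dots> < real n - 1"
  proof -
    have "of_rat (costc h pb C) < (of_rat (of_nat (length pb) - 1) :: real)"
      using cost by (simp only: of_rat_less)
    then have "of_rat (costc h pb C) < real (length pb) - 1" by (simp add: of_rat_diff)
    then show ?thesis using n by simp
  qed
  finally show ?thesis .
qed

lemma hubok_code: "hubok h pb \<longleftrightarrow> 0 < h \<and> h < length pb \<and> list_all (\<lambda>v. pb ! v < v) [1..<h] \<and> list_all (\<lambda>x. pb ! x < h) [h..<length pb]"
  unfolding hubok_def list_all_iff by auto

lemma chk_aux_code: "chk_aux h pb BT WT C \<longleftrightarrow> (\<forall>a\<in>set BT. \<forall>b\<in>set BT. \<not> ETy h pb a b) \<and> (\<forall>a\<in>set WT. \<forall>b\<in>set WT. \<not> ETy h pb a b)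
     \<and> (\<forall>a\<in>set BT. a \<notin> set WT) \<and> (\<forall>p\<in>set C. fst ` set (fst p) \<subseteq> set BT \<and> fst ` set (snd p) \<subseteq> set WT)
     \<and> list_all (\<lambda>i. tau h pb i \<in> set BT \<union> set WT) [0..<length pb]"
  unfolding chk_aux_def list_all_iff by auto



definition pb20 :: "nat list" where "pb20 = [0,0,0,0,0,1,1,1,2,2,2,3,3,3,4,4,4,5,5,5]"
definition BT20 :: "nat list" where "BT20 = [0,5,7,8,9,10]"
definition WT20 :: "nat list" where "WT20 = [1,2,3,4,11]"
definition C20 :: cert where "C20 = [([(0, 11841/10000), (5, 5813/10000), (7, 212/625), (8, 176/625), (9, 176/625), (10, 176/625)],
    [(1, 1821/2000), (2, 189/250), (3, 189/250), (4, 189/250), (11, 1083/5000)]),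
   ([(8, 1487/2500), (9, -4501/10000), (10, -1447/10000)],
    [(2, 5151/5000), (3, -7797/10000), (4, -1253/5000)]),
   ([(0, 2987/10000), (5, -5727/5000), (7, -3581/10000), (8, 2189/10000), (9, 2189/10000), (10, 2189/10000)],
    [(1, -7481/10000), (2, 2287/5000), (3, 2287/5000), (4, 2287/5000), (11, -5483/10000)]),
   ([(8, -441/2500), (9, -4269/10000), (10, 6033/10000)],
    [(2, -611/2000), (3, -1479/2000), (4, 10449/10000)]),
   ([(0, -1021/5000), (5, 2713/5000), (7, -1487/2500), (8, 651/5000), (9, 651/5000), (10, 651/5000)],
    [(1, -1779/2500), (2, 1557/10000), (3, 1557/10000), (4, 1557/10000), (11, 567/1250)]),
   ([(0, 23/2000)],
    [(1, 257/115000), (2, -3/3125), (3, -3/3125), (4, -3/3125), (11, -7373/1150000)]),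
   ([(5, 111/10000)],
    [(1, -3323/1110000), (2, -661/185000), (3, -661/185000), (4, -661/185000), (11, -697/138750)]),
   ([(7, 4/625)],
    [(1, 411/640000), (2, -299/64000), (3, -299/64000), (4, -299/64000), (11, -1567/640000)]),
   ([(8, 17/2000)],
    [(1, 1261/850000), (2, 753/106250), (3, 779/212500), (4, 1133/106250), (11, -3041/850000)]),
   ([(9, 3/400)],
    [(1, 1261/750000), (2, -1153/750000), (3, 649/62500), (4, -277/150000), (11, -3041/750000)]),
   ([(10, 43/5000)],
    [(1, 1261/860000), (2, 9149/860000), (3, 779/215000), (4, 6341/860000), (11, -3041/860000)])]"

lemma hub20: "hubok 6 pb20"
  by (simp add: hubok_code pb20_def upt_rec)
lemma deg20: "degok pb20"
  by (simp add: degok_def chc_def pb20_def)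
lemma id20: "chk_id 6 pb20 BT20 WT20 C20"
  by (simp add: chk_id_def pb20_def BT20_def WT20_def C20_def ETy_def lkr_def)
lemma aux20: "chk_aux 6 pb20 BT20 WT20 C20"
  by (simp add: chk_aux_code upt_rec pb20_def BT20_def WT20_def C20_def ETy_def tau_def)
lemma cost20: "costc 6 pb20 C20 < of_nat (length pb20) - 1"
  by (simp add: costc_def pb20_def C20_def lkr_def tau_def upt_rec power2_eq_square)

definition pb23 :: "nat list" where "pb23 = [0,0,0,0,0,1,1,1,2,2,2,3,3,3,4,4,4,5,5,5,6,6,6]"
definition BT23 :: "nat list" where "BT23 = [0,5,6,8,9,10,11]"
definition WT23 :: "nat list" where "WT23 = [1,2,3,4,12,13]"
definition C23 :: cert where "C23 = [([(0, 5629/5000), (5, 3057/5000), (6, 3057/5000), (8, 228/625), (9, 2537/10000), (10, 2537/10000), (11, 2537/10000)],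
    [(1, 9949/10000), (2, 3459/5000), (3, 3459/5000), (4, 3459/5000), (12, 1121/5000), (13, 1121/5000)]),
   ([(5, 2023/2500), (6, -2023/2500), (9, 3013/10000), (10, -993/5000), (11, -1027/10000)],
    [(2, 5219/10000), (3, -3441/10000), (4, -889/5000), (12, 292/625), (13, -292/625)]),
   ([(0, 4599/10000), (5, -101/125), (6, -101/125), (8, -3037/10000), (9, 509/2000), (10, 509/2000), (11, 509/2000)],
    [(1, -6659/10000), (2, 279/500), (3, 279/500), (4, 279/500), (12, -737/2000), (13, -737/2000)]),
   ([(5, 237/10000), (6, -237/10000), (9, -697/5000), (10, -4537/10000), (11, 5931/10000)],
    [(2, -483/2000), (3, -3929/5000), (4, 642/625), (12, 137/10000), (13, -137/10000)]),
   ([(0, -757/2500), (5, 119/500), (6, 119/500), (8, -3537/5000), (9, 1349/10000), (10, 1349/10000), (11, 1349/10000)],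
    [(1, -6147/10000), (2, 293/2500), (3, 293/2500), (4, 293/2500), (12, 1369/5000), (13, 1369/5000)]),
   ([(5, -4589/10000), (6, 4589/10000), (9, 5241/10000), (10, -3737/10000), (11, -94/625)],
    [(2, 4539/5000), (3, -809/1250), (4, -521/2000), (12, -53/200), (13, 53/200)]),
   ([(0, 51/5000)],
    [(1, 5783/1020000), (2, 37/10625), (3, 37/10625), (4, 37/10625), (12, -819/340000), (13, -819/340000)]),
   ([(5, 93/10000)],
    [(1, -1523/465000), (2, -463/930000), (3, 3649/465000), (4, -169/186000), (12, 2029/930000), (13, 21/62000)]),
   ([(6, 91/10000)],
    [(1, -1523/455000), (2, 177/130000), (3, -3261/455000), (4, 1621/910000), (12, 9/26000), (13, 2029/910000)]),
   ([(8, 63/10000)],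
    [(1, -1213/630000), (2, 9/17500), (3, 9/17500), (4, 9/17500), (12, -1549/630000), (13, -1549/630000)]),
   ([(9, 41/5000)],
    [(1, -231/164000), (2, -2249/820000), (3, 339/820000), (4, -4007/820000), (12, -299/820000), (13, -6083/820000)]),
   ([(10, 17/2000)],
    [(1, -231/170000), (2, -529/850000), (3, -453/85000), (4, 4977/850000), (12, -76/10625), (13, -151/425000)]),
   ([(11, 19/2500)],
    [(1, -231/152000), (2, 23/5000), (3, 4909/760000), (4, -63/190000), (12, -1597/380000), (13, -797/190000)])]"

lemma hub23: "hubok 7 pb23"
  by (simp add: hubok_code pb23_def upt_rec)
lemma deg23: "degok pb23"
  by (simp add: degok_def chc_def pb23_def)
lemma id23: "chk_id 7 pb23 BT23 WT23 C23"
  by (simp add: chk_id_def pb23_def BT23_def WT23_def C23_def ETy_def lkr_def)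
lemma aux23: "chk_aux 7 pb23 BT23 WT23 C23"
  by (simp add: chk_aux_code upt_rec pb23_def BT23_def WT23_def C23_def ETy_def tau_def)
lemma cost23: "costc 7 pb23 C23 < of_nat (length pb23) - 1"
  by (simp add: costc_def pb23_def C23_def lkr_def tau_def upt_rec power2_eq_square)

definition pb26 :: "nat list" where "pb26 = [0,0,0,0,0,4,4,4,1,1,1,2,2,2,3,3,3,5,5,5,6,6,6,7,7,7]"
definition BT26 :: "nat list" where "BT26 = [0,5,6,7,9,10,11]"
definition WT26 :: "nat list" where "WT26 = [1,2,3,4,13,14,15]"
definition C26 :: cert where "C26 = [([(9, 5373/10000), (10, -5373/10000)],
    [(1, 4653/5000), (2, -4653/5000)]),
   ([(0, 664/625), (5, 157/250), (6, 157/250), (7, 157/250), (9, 283/1250), (10, 283/1250), (11, 283/1250)],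
    [(1, 157/250), (2, 157/250), (3, 157/250), (4, 664/625), (13, 283/1250), (14, 283/1250), (15, 283/1250)]),
   ([(0, 2919/5000), (5, -6331/10000), (6, -6331/10000), (7, -6331/10000), (9, 2809/10000), (10, 2809/10000), (11, 2809/10000)],
    [(1, 6331/10000), (2, 6331/10000), (3, 6331/10000), (4, -2919/5000), (13, -2809/10000), (14, -2809/10000), (15, -2809/10000)]),
   ([(5, -601/1000), (6, -151/1000), (7, 94/125), (9, -417/2000), (10, -417/2000), (11, 417/1000)],
    [(1, -3611/10000), (2, -3611/10000), (3, 7223/10000), (13, -347/1000), (14, -109/1250), (15, 2171/5000)]),
   ([(0, -921/2000), (5, 399/5000), (6, 399/5000), (7, 399/5000), (9, 1663/10000), (10, 1663/10000), (11, 1663/10000)],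
    [(1, 399/5000), (2, 399/5000), (3, 399/5000), (4, -921/2000), (13, 1663/10000), (14, 1663/10000), (15, 1663/10000)]),
   ([(5, -2843/5000), (6, 2649/2500), (7, -491/1000), (9, -499/10000), (10, -499/10000), (11, 999/10000)],
    [(1, -173/2000), (2, -173/2000), (3, 173/1000), (13, -3283/10000), (14, 3059/5000), (15, -567/2000)]),
   ([(5, -6857/10000), (6, 239/2500), (7, 59/100), (9, 1121/5000), (10, 1121/5000), (11, -1121/2500)],
    [(1, 3883/10000), (2, 3883/10000), (3, -3883/5000), (13, -3959/10000), (14, 69/1250), (15, 3407/10000)]),
   ([(0, 8/625)],
    [(1, -1077/320000), (2, -1077/320000), (3, -1077/320000), (4, 6843/1280000), (13, 4321/1280000), (14, 4321/1280000), (15, 4321/1280000)]),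
   ([(5, 153/10000)],
    [(1, 2897/382500), (2, 2897/382500), (3, 127/102000), (4, -359/127500), (13, 421/255000), (14, 2519/1530000), (15, 127/22500)]),
   ([(6, 3/200)],
    [(1, 7139/1500000), (2, 7139/1500000), (3, 2101/500000), (4, -359/125000), (13, 2999/1500000), (14, 467/1500000), (15, 681/100000)]),
   ([(7, 3/200)],
    [(1, 1409/500000), (2, 1409/500000), (3, 3097/1500000), (4, -359/125000), (13, 1399/500000), (14, 3749/500000), (15, -1763/1500000)]),
   ([(9, 17/2000)],
    [(1, 3833/850000), (2, 6109/850000), (3, 364/53125), (4, 4321/850000), (13, 2127/850000), (14, -1803/425000), (15, -873/850000)]),
   ([(10, 17/2000)],
    [(1, 6109/850000), (2, 3833/850000), (3, 364/53125), (4, 4321/850000), (13, 2127/850000), (14, -1803/425000), (15, -873/850000)]),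
   ([(11, 79/10000)],
    [(1, 1151/197500), (2, 1151/197500), (3, 303/790000), (4, 4321/790000), (13, -3323/790000), (14, -629/395000), (15, 2229/790000)])]"

lemma hub26: "hubok 8 pb26"
  by (simp add: hubok_code pb26_def upt_rec)
lemma deg26: "degok pb26"
  by (simp add: degok_def chc_def pb26_def)
lemma id26: "chk_id 8 pb26 BT26 WT26 C26"
  by (simp add: chk_id_def pb26_def BT26_def WT26_def C26_def ETy_def lkr_def)
lemma aux26: "chk_aux 8 pb26 BT26 WT26 C26"
  by (simp add: chk_aux_code upt_rec pb26_def BT26_def WT26_def C26_def ETy_def tau_def)
lemma cost26: "costc 8 pb26 C26 < of_nat (length pb26) - 1"
  by (simp add: costc_def pb26_def C26_def lkr_def tau_def upt_rec power2_eq_square)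


lemma family:
  assumes hb: "hubok h pb" and dg: "degok pb" and ci: "chk_id h pb BT WT C" and ca: "chk_aux h pb BT WT C"
    and cost: "costc h pb C < of_nat (length pb) - 1" and n: "n = length pb + 4 * k"
  shows "\<exists>E. is_tree n E \<and> max_degree n E = 4 \<and> strongly_hypoenergetic n E"
proof (intro exI conjI)
  show "is_tree n (TE pb n)" by (rule TE_tree[OF hb])
  show "max_degree n (TE pb n) = 4" by (rule TE_maxdeg[OF hb dg], use n in simp)
  show "strongly_hypoenergetic n (TE pb n)"
    unfolding strongly_hypoenergetic_def
    using TE_simple[OF hb] TE_connected[OF hb] TE_energy[OF hb ci ca cost n] by blast
qed

theorem lemma2p4:
  fixes n :: nat
  assumes "(n mod 4 = 0 \<and> n \<ge> 20) \<or> (n mod 4 = 2 \<and> n \<ge> 26) \<or> (n mod 4 = 3 \<and> n \<ge> 23)"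
  shows "\<exists>E. is_tree n E \<and> max_degree n E = 4 \<and> strongly_hypoenergetic n E"
proof -
  consider (a) "n mod 4 = 0" "n \<ge> 20" | (b) "n mod 4 = 2" "n \<ge> 26" | (c) "n mod 4 = 3" "n \<ge> 23"
    using assms by auto
  then show ?thesis
  proof cases
    case a
    have "n = length pb20 + 4 * ((n - 20) div 4)" using a by (simp add: pb20_def) presburger
    then show ?thesis by (rule family[OF hub20 deg20 id20 aux20 cost20])
  next
    case b
    have "n = length pb26 + 4 * ((n - 26) div 4)" using b by (simp add: pb26_def) presburger
    then show ?thesis by (rule family[OF hub26 deg26 id26 aux26 cost26])
  next
    case c
    have "n = length pb23 + 4 * ((n - 23) div 4)" using c by (simp add: pb23_def) presburger
    then show ?thesis by (rule family[OF hub23 deg23 id23 aux23 cost23])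
  qed
qed

end
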